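(* Let $0<\delta<1$. If $\beta+2\alpha<1$ and $s_N=o(N)$, then $$\mu_{N,\beta,\alpha}\big(|m_1|,\dots,|m_{s_N}|>\delta\big)\le\exp\Big\{-\Big(\tfrac{1-(\beta+2\alpha)}{2}-o(1)\Big)N\delta^2\Big\}=o(1).$$ At the critical temperature $\beta+2\alpha=1$ one has $$\mu_{N,\beta,\alpha}\big(|m_1|,\dots,|m_{s_N}|>\delta\big)\le\exp\Big\{-\Big(\tfrac{1}{12}-o(1)\Big)N\delta^4\Big\}.$$ Here $\{|m_1|,\dots,|m_{s_N}|>\delta\}$ is the event that $|m_k|>\delta$ for all $k=1,\dots,s_N$.
   Context: Parameters $\beta>2\alpha>0$. Let $(s_N)$ be a non-decreasing sequence of positive integers with $s_N$ dividing $N$; $\{1,\dots,N\}$ is partitioned into blocks $S_1,\dots,S_{s_N}$ of size $N/s_N$, block indices cyclic. For $\sigma\in\{-1,+1\}^N$, $m_k=\frac{s_N}{N}\sum_{i\in S_k}\sigma_i$, $m=(m_1,\dots,m_{s_N})$. $A=\beta I+\alpha(P+P^T)$ with $P$ the $s_N\times s_N$ cyclic shift matrix. The Gibbs measure is $\mu_{N,\beta,\alpha}(\sigma)=Z_{N,\beta,\alpha}^{-1}\exp\{\frac{N}{2s_N}m^TAm\}2^{-N}$ on $\{-1,+1\}^N$. *)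

theory Defs
  imports "HOL-Analysis.Analysis" "HOL-Library.FuncSet"
begin

text \<open>Spin configurations on {0..<N} (the paper's {1..N}), values in {-1,+1}.\<close>
definition configs :: "nat \<Rightarrow> (nat \<Rightarrow> real) set" where
  "configs N = PiE {..<N} (\<lambda>_. {-1, 1})"

text \<open>Block k (0 \<le> k < s, the paper's S_(k+1)): consecutive indices of size N/s.\<close>
definition block :: "nat \<Rightarrow> nat \<Rightarrow> nat \<Rightarrow> nat set" where
  "block N s k = {k * (N div s) ..< Suc k * (N div s)}"

definition blockmag :: "nat \<Rightarrow> nat \<Rightarrow> (nat \<Rightarrow> real) \<Rightarrow> nat \<Rightarrow> real" where
  "blockmag N s \<sigma> k = real s / real N * (\<Sum>i\<in>block N s k. \<sigma> i)"

definition shiftP :: "nat \<Rightarrow> nat \<Rightarrow> nat \<Rightarrow> real" where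
  "shiftP s i j = (if j = (i + 1) mod s then 1 else 0)"

definition interA :: "real \<Rightarrow> real \<Rightarrow> nat \<Rightarrow> nat \<Rightarrow> nat \<Rightarrow> real" where
  "interA \<beta> \<alpha> s i j = \<beta> * (if i = j then 1 else 0) + \<alpha> * (shiftP s i j + shiftP s j i)"

definition energy :: "nat \<Rightarrow> nat \<Rightarrow> real \<Rightarrow> real \<Rightarrow> (nat \<Rightarrow> real) \<Rightarrow> real" where
  "energy N s \<beta> \<alpha> \<sigma> = real N / (2 * real s) *
     (\<Sum>i<s. \<Sum>j<s. blockmag N s \<sigma> i * interA \<beta> \<alpha> s i j * blockmag N s \<sigma> j)"

definition gibbs_weight :: "nat \<Rightarrow> nat \<Rightarrow> real \<Rightarrow> real \<Rightarrow> (nat \<Rightarrow> real) \<Rightarrow> real" where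
  "gibbs_weight N s \<beta> \<alpha> \<sigma> = exp (energy N s \<beta> \<alpha> \<sigma>) * (1/2) ^ N"

definition partition_fn :: "nat \<Rightarrow> nat \<Rightarrow> real \<Rightarrow> real \<Rightarrow> real" where
  "partition_fn N s \<beta> \<alpha> = (\<Sum>\<sigma>\<in>configs N. gibbs_weight N s \<beta> \<alpha> \<sigma>)"

definition gibbs :: "nat \<Rightarrow> nat \<Rightarrow> real \<Rightarrow> real \<Rightarrow> (nat \<Rightarrow> real) set \<Rightarrow> real" where
  "gibbs N s \<beta> \<alpha> E = (\<Sum>\<sigma>\<in>E \<inter> configs N. gibbs_weight N s \<beta> \<alpha> \<sigma>) / partition_fn N s \<beta> \<alpha>"

definition all_large :: "nat \<Rightarrow> nat \<Rightarrow> real \<Rightarrow> (nat \<Rightarrow> real) set" where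
  "all_large N s \<delta> = {\<sigma> \<in> configs N. \<forall>k<s. \<bar>blockmag N s \<sigma> k\<bar> > \<delta>}"

end

theory Submission
  imports Defs "HOL-Real_Asymp.Real_Asymp"
begin


lemma artanh_lb:
  fixes x :: real assumes "0 \<le> x" "x < 1"
  shows "2*x + 2*x^3/3 \<le> ln (1+x) - ln (1-x)"
proof -
  let ?G = "\<lambda>t::real. ln (1+t) - ln (1-t) - 2*t - 2*t^3/3"
  have "?G 0 \<le> ?G x"
  proof (rule DERIV_nonneg_imp_nondecreasing[OF assms(1)])
    fix t :: real assume t: "0 \<le> t" "t \<le> x"
    then have t1: "t < 1" using assms by simp
    have "DERIV ?G t :> (1/(1+t) + 1/(1-t) - 2 - 2*t^2)"
      using t t1 by (rule_tac derivative_eq_intros refl | simp)+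
    moreover have "1/(1+t) + 1/(1-t) - 2 - 2*t^2 \<ge> 0"
    proof -
      have e: "1/(1+t) + 1/(1-t) = 2/(1-t^2)"
        using t t1 by (simp add: field_simps power2_eq_square)
      have p: "0 < 1 - t^2" using t t1 by (smt (verit) mult_left_le_one_le power2_eq_square)
      have "(2 + 2*t^2) * (1-t^2) \<le> 2"
        using t by (simp add: algebra_simps power2_eq_square)
      then have "2 + 2*t^2 \<le> 2/(1-t^2)" using p by (simp add: field_simps)
      then show ?thesis using e by simp
    qed
    ultimately show "\<exists>y. DERIV ?G t :> y \<and> y \<ge> 0" by blast
  qed
  then show ?thesis by simp
qed

lemma ent_lb:
  fixes x :: real assumes "0 \<le> x" "x < 1"
  shows "x^2 + x^4/6 \<le> (1+x) * ln (1+x) + (1-x) * ln (1-x)"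
proof -
  let ?F = "\<lambda>t::real. (1+t) * ln (1+t) + (1-t) * ln (1-t) - t^2 - t^4/6"
  have "?F 0 \<le> ?F x"
  proof (rule DERIV_nonneg_imp_nondecreasing[OF assms(1)])
    fix t :: real assume t: "0 \<le> t" "t \<le> x"
    then have t1: "t < 1" using assms by simp
    have "DERIV ?F t :> (ln (1+t) - ln (1-t) - 2*t - 2*t^3/3)"
      using t t1 by (rule_tac derivative_eq_intros refl | simp)+
    moreover have "ln (1+t) - ln (1-t) - 2*t - 2*t^3/3 \<ge> 0"
      using artanh_lb[OF t(1) t1] by simp
    ultimately show "\<exists>y. DERIV ?F t :> y \<and> y \<ge> 0" by blast
  qed
  then show ?thesis by simp
qed




lemma chernoff_pos:
  fixes x :: real assumes "0 \<le> x" "x < 1"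
  shows "\<exists>l. (exp l + exp (-l))/2 \<le> exp (l*x - x^2/2 - x^4/12)"
proof -
  define a where "a = ln (1+x)"
  define b where "b = ln (1-x)"
  have ea: "exp a = 1+x" using assms unfolding a_def by simp
  have eb: "exp b = 1-x" using assms unfolding b_def by simp
  define l where "l = (a-b)/2"
  have "exp l + exp (-l) = exp (-(a+b)/2) * (exp a + exp b)"
    unfolding l_def by (simp add: exp_add[symmetric] algebra_simps diff_divide_distrib add_divide_distrib)
  also have "\<dots> = 2 * exp (-(a+b)/2)" using ea eb by simp
  finally have c: "(exp l + exp (-l))/2 = exp (-(a+b)/2)" by simp
  have "x^2 + x^4/6 \<le> (1+x)*a + (1-x)*b" using ent_lb[OF assms] unfolding a_def b_def .
  then have "-(a+b)/2 \<le> l*x - x^2/2 - x^4/12" unfolding l_def by (simp add: field_simps; linarith)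
  then show ?thesis using c by (intro exI[of _ l]) simp
qed

lemma chernoff_one: "(exp 50 + exp (-50))/2 \<le> exp ((50::real) - 7/12)"
proof -
  have h1: "exp (-100::real) \<le> 1/101"
  proof -
    have "101 \<le> exp (100::real)" using exp_ge_add_one_self[of 100] by simp
    then show ?thesis by (simp add: exp_minus field_simps)
  qed
  have h2: "exp (7/36::real) \<le> 36/29"
  proof -
    have "29/36 \<le> exp (-7/36::real)" using exp_ge_add_one_self[of "-7/36"] by simp
    then show ?thesis by (simp add: exp_minus field_simps)
  qed
  have h3: "exp (7/12::real) = exp (7/36) ^ 3"
    by (simp add: exp_of_nat_mult[symmetric])
  have h4: "exp (7/12::real) \<le> (36/29)^3" unfolding h3
    by (rule power_mono[OF h2]) simp
  have "(1 + exp (-100::real)) * exp (7/12) \<le> (1 + 1/101) * (36/29)^3"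
    by (rule mult_mono) (use h1 h4 in auto)
  also have "\<dots> \<le> 2" by (simp add: power_divide field_simps)
  finally have *: "(1 + exp (-100::real)) * exp (7/12) \<le> 2" .
  have "(exp 50 + exp (-50))/2 = exp (50::real) * ((1 + exp (-100)) /2)"
    by (simp add: field_simps exp_add[symmetric])
  also have "\<dots> \<le> exp 50 * exp (-7/12)"
  proof (rule mult_left_mono)
    show "(1 + exp (-100)) / 2 \<le> exp (-7/12::real)"
      using * by (simp add: exp_minus field_simps)
  qed simp
  also have "\<dots> = exp ((50::real) - 7/12)" by (simp add: exp_add[symmetric])
  finally show ?thesis .
qed

lemma chernoff:
  fixes x :: real assumes "\<bar>x\<bar> \<le> 1"
  shows "\<exists>l. (exp l + exp (-l))/2 \<le> exp (l*x - x^2/2 - x^4/12)"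
proof -
  have pos: "\<exists>l. (exp l + exp (-l))/2 \<le> exp (l*y - y^2/2 - y^4/12)" if "0 \<le> y" "y \<le> 1" for y :: real
  proof (cases "y = 1")
    case True
    then show ?thesis using chernoff_one by (intro exI[of _ 50]) simp
  next
    case False
    then show ?thesis using chernoff_pos[of y] that by simp
  qed
  show ?thesis
  proof (cases "0 \<le> x")
    case True
    then show ?thesis using pos[of x] assms by simp
  next
    case False
    then obtain l where l: "(exp l + exp (-l))/2 \<le> exp (l*(-x) - (-x)^2/2 - (-x)^4/12)"
      using pos[of "-x"] assms by auto
    show ?thesis
      by (rule exI[of _ "-l"]) (use l in \<open>simp add: add.commute\<close>)
  qed
qed



lemma sum_rot:
  fixes f :: "nat \<Rightarrow> real" assumes "0 < s"
  shows "(\<Sum>i<s. f ((i+1) mod s)) = (\<Sum>i<s. f i)"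
proof -
  obtain t where s: "s = Suc t" using assms by (cases s) auto
  have "(\<Sum>i<s. f ((i+1) mod s)) = (\<Sum>i<t. f ((i+1) mod s)) + f (s mod s)"
    by (simp add: s)
  also have "(\<Sum>i<t. f ((i+1) mod s)) = (\<Sum>i<t. f (Suc i))"
    by (rule sum.cong) (auto simp: s)
  also have "(\<Sum>i<t. f (Suc i)) + f (s mod s) = (\<Sum>i<s. f i)"
    using sum.lessThan_Suc_shift[of f t] by (simp add: s)
  finally show ?thesis .
qed

lemma quad_form:
  fixes m :: "nat \<Rightarrow> real" assumes "0 < s"
  shows "(\<Sum>i<s. \<Sum>j<s. m i * interA \<beta> \<alpha> s i j * m j)
     = \<beta> * (\<Sum>i<s. m i ^ 2) + 2 * \<alpha> * (\<Sum>i<s. m i * m ((i+1) mod s))"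
proof -
  have e1: "(\<Sum>j<s. m i * interA \<beta> \<alpha> s i j * m j) =
     \<beta> * m i ^ 2 + \<alpha> * (m i * m ((i+1) mod s)) + \<alpha> * (\<Sum>j<s. m i * shiftP s j i * m j)"
    if "i < s" for i
  proof -
    have "(\<Sum>j<s. m i * interA \<beta> \<alpha> s i j * m j) =
       (\<Sum>j<s. \<beta> * (if i = j then m i * m j else 0)) + \<alpha> * (\<Sum>j<s. m i * shiftP s i j * m j)
       + \<alpha> * (\<Sum>j<s. m i * shiftP s j i * m j)"
      unfolding interA_def by (simp add: sum.distrib sum_distrib_left algebra_simps; rule sum.cong; auto)
    also have "(\<Sum>j<s. \<beta> * (if i = j then m i * m j else 0)) = \<beta> * m i ^ 2"
      using that by (simp add: sum_distrib_left[symmetric] sum.delta power2_eq_square)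
    also have "(\<Sum>j<s. m i * shiftP s i j * m j) = m i * m ((i+1) mod s)"
      using assms unfolding shiftP_def by (simp add: if_distrib if_distribR cong: if_cong)
    finally show ?thesis by simp
  qed
  have "(\<Sum>i<s. \<Sum>j<s. m i * interA \<beta> \<alpha> s i j * m j) =
      \<beta> * (\<Sum>i<s. m i ^ 2) + \<alpha> * (\<Sum>i<s. m i * m ((i+1) mod s))
      + \<alpha> * (\<Sum>i<s. \<Sum>j<s. m i * shiftP s j i * m j)"
    by (simp add: e1 sum.distrib sum_distrib_left)
  also have "(\<Sum>i<s. \<Sum>j<s. m i * shiftP s j i * m j) = (\<Sum>j<s. \<Sum>i<s. m i * shiftP s j i * m j)"
    by (rule sum.swap)
  also have "\<dots> = (\<Sum>j<s. m ((j+1) mod s) * m j)"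
    using assms unfolding shiftP_def by (simp add: if_distrib if_distribR cong: if_cong)
  finally show ?thesis by (simp add: algebra_simps)
qed

lemma cyc_bound:
  fixes m :: "nat \<Rightarrow> real" assumes "0 < s"
  shows "\<bar>\<Sum>i<s. m i * m ((i+1) mod s)\<bar> \<le> (\<Sum>i<s. m i ^ 2)"
proof -
  have "\<bar>\<Sum>i<s. m i * m ((i+1) mod s)\<bar> \<le> (\<Sum>i<s. \<bar>m i * m ((i+1) mod s)\<bar>)"
    by (rule sum_abs)
  also have "\<dots> \<le> (\<Sum>i<s. (m i ^ 2 + m ((i+1) mod s) ^ 2) / 2)"
  proof (rule sum_mono)
    fix i
    have "0 \<le> (\<bar>m i\<bar> - \<bar>m ((i+1) mod s)\<bar>)^2" by simp
    then show "\<bar>m i * m ((i+1) mod s)\<bar> \<le> (m i ^ 2 + m ((i+1) mod s) ^ 2) / 2"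
      by (simp add: power2_eq_square algebra_simps abs_mult)
  qed
  also have "\<dots> = (\<Sum>i<s. m i ^ 2)"
    using sum_rot[OF assms, of "\<lambda>i. m i ^ 2"]
    by (simp add: sum.distrib sum_divide_distrib[symmetric])
  finally show ?thesis .
qed

lemma quad_bounds:
  fixes m :: "nat \<Rightarrow> real" assumes "0 < s" "0 < \<alpha>" "2*\<alpha> < \<beta>"
  shows "0 \<le> (\<Sum>i<s. \<Sum>j<s. m i * interA \<beta> \<alpha> s i j * m j)"
    and "(\<Sum>i<s. \<Sum>j<s. m i * interA \<beta> \<alpha> s i j * m j) \<le> (\<beta> + 2*\<alpha>) * (\<Sum>i<s. m i ^ 2)"
proof -
  have c: "\<bar>\<Sum>i<s. m i * m ((i+1) mod s)\<bar> \<le> (\<Sum>i<s. m i ^ 2)" by (rule cyc_bound[OF assms(1)])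
  have q: "0 \<le> (\<Sum>i<s. m i ^ 2)" by (simp add: sum_nonneg)
  have "(2*\<alpha>) * (-(\<Sum>i<s. m i ^ 2)) \<le> 2 * \<alpha> * (\<Sum>i<s. m i * m ((i+1) mod s))"
    by (rule mult_left_mono) (use c assms in \<open>auto simp: abs_le_iff\<close>)
  then have "0 \<le> \<beta> * (\<Sum>i<s. m i ^ 2) + 2 * \<alpha> * (\<Sum>i<s. m i * m ((i+1) mod s))"
    using q assms mult_right_mono[of "2*\<alpha>" \<beta> "\<Sum>i<s. m i ^ 2"] by linarith
  then show "0 \<le> (\<Sum>i<s. \<Sum>j<s. m i * interA \<beta> \<alpha> s i j * m j)"
    by (simp add: quad_form[OF assms(1)])
  have "2 * \<alpha> * (\<Sum>i<s. m i * m ((i+1) mod s)) \<le> 2*\<alpha> * (\<Sum>i<s. m i ^ 2)"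
    by (rule mult_left_mono) (use c assms in \<open>auto simp: abs_le_iff\<close>)
  then show "(\<Sum>i<s. \<Sum>j<s. m i * interA \<beta> \<alpha> s i j * m j) \<le> (\<beta> + 2*\<alpha>) * (\<Sum>i<s. m i ^ 2)"
    unfolding quad_form[OF assms(1)] by (simp add: algebra_simps)
qed




lemma int_sum:
  fixes \<sigma> :: "nat \<Rightarrow> real"
  assumes "finite A" "\<forall>i\<in>A. \<sigma> i \<in> {-1,1}"
  shows "\<exists>j::int. (\<Sum>i\<in>A. \<sigma> i) = of_int j \<and> \<bar>j\<bar> \<le> int (card A)"
  using assms
proof (induction A rule: finite_induct)
  case empty
  then show ?case by simp
next
  case (insert x F)
  then obtain j where j: "(\<Sum>i\<in>F. \<sigma> i) = of_int j" "\<bar>j\<bar> \<le> int (card F)" by auto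
  have "\<sigma> x = -1 \<or> \<sigma> x = 1" using insert by auto
  then show ?case
  proof
    assume h: "\<sigma> x = -1"
    show ?case using insert j h by (intro exI[of _ "j - 1"]) auto
  next
    assume h: "\<sigma> x = 1"
    show ?case using insert j h by (intro exI[of _ "j + 1"]) auto
  qed
qed

lemma config_sum:
  fixes f :: "nat \<Rightarrow> real \<Rightarrow> real"
  shows "(\<Sum>\<sigma>\<in>configs N. \<Prod>i<N. f i (\<sigma> i)) = (\<Prod>i<N. f i 1 + f i (-1))"
proof -
  have "(\<Prod>i<N. \<Sum>y\<in>{-1,1::real}. f i y) = (\<Sum>\<sigma>\<in>configs N. \<Prod>i<N. f i (\<sigma> i))"
    unfolding configs_def by (rule prod_sum_PiE) auto
  moreover have "(\<Sum>y\<in>{-1,1::real}. f i y) = f i 1 + f i (-1)" for i by simp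
  ultimately show ?thesis by simp
qed

lemma card_configs: "card (configs N) = 2 ^ N"
  unfolding configs_def by (simp add: card_PiE numeral_2_eq_2)

lemma finite_configs: "finite (configs N)"
  unfolding configs_def by (rule finite_PiE) auto

lemma group_sum:
  fixes f :: "nat \<Rightarrow> 'a::comm_monoid_add"
  shows "(\<Sum>k<s. \<Sum>i\<in>{k*n..<Suc k*n}. f i) = (\<Sum>i<s*n. f i)"
proof (induction s)
  case 0
  then show ?case by simp
next
  case (Suc s)
  have "(\<Sum>i<s*n. f i) + (\<Sum>i\<in>{s*n..<Suc s*n}. f i) = (\<Sum>i<Suc s*n. f i)"
    using sum.atLeastLessThan_concat[of 0 "s*n" "Suc s * n" f] by (simp add: atLeast0LessThan)
  then show ?case using Suc by simp
qed

lemma group_prod: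
  fixes f :: "nat \<Rightarrow> 'a::comm_monoid_mult"
  shows "(\<Prod>k<s. \<Prod>i\<in>{k*n..<Suc k*n}. f i) = (\<Prod>i<s*n. f i)"
proof (induction s)
  case 0
  then show ?case by simp
next
  case (Suc s)
  have "(\<Prod>i<s*n. f i) * (\<Prod>i\<in>{s*n..<Suc s*n}. f i) = (\<Prod>i<Suc s*n. f i)"
    using prod.atLeastLessThan_concat[of 0 "s*n" "Suc s * n" f] by (simp add: atLeast0LessThan)
  then show ?case using Suc by simp
qed

lemma div_in_block: "i \<in> {k*n..<Suc k*n} \<Longrightarrow> i div n = k"
  by (metis atLeastLessThan_iff div_nat_eqI mult.commute)




lemma main_bound:
  fixes N s n :: nat and \<beta> \<alpha> \<delta> :: real
  assumes a: "0 < \<alpha>" "2*\<alpha> < \<beta>" "\<beta> + 2*\<alpha> \<le> 1" and s: "0 < s" and N: "N = s*n"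
    and n: "0 < n" and d: "0 < \<delta>"
  shows "gibbs N s \<beta> \<alpha> (all_large N s \<delta>)
     \<le> ((2*n+1) * exp (-(n*((1-(\<beta>+2*\<alpha>))*\<delta>^2/2 + \<delta>^4/12))))^s"
proof -
  define c where "c = \<beta> + 2*\<alpha>"
  define ch where "ch = (\<lambda>l::real. (exp l + exp (-l))/2)"
  define lam :: "int \<Rightarrow> real" where
    "lam j = (SOME l. ch l \<le> exp (l*(j/n) - (j/n)^2/2 - (j/n)^4/12))" for j
  have lam: "ch (lam j) \<le> exp (lam j*(j/n) - (j/n)^2/2 - (j/n)^4/12)" if "\<bar>j\<bar> \<le> int n" for j
  proof -
    have h: "\<bar>real_of_int j\<bar> \<le> real n" using that by (metis of_int_abs of_int_le_iff of_int_of_nat_eq)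
    have "\<bar>real_of_int j / real n\<bar> \<le> 1" using h n by (simp add: abs_divide)
    from chernoff[OF this] have ex: "\<exists>l. ch l \<le> exp (l*(j/n) - (j/n)^2/2 - (j/n)^4/12)" unfolding ch_def . show ?thesis unfolding lam_def by (rule someI_ex[OF ex])
  qed
  define J where "J = {j \<in> {-int n..int n}. \<delta>*n < \<bar>of_int j\<bar>}"
  have finJ: "finite J" unfolding J_def by (rule finite_subset[of _ "{-int n..int n}"]) auto
  have cardJ: "card J \<le> 2*n+1"
  proof -
    have "card J \<le> card {-int n..int n}" unfolding J_def by (rule card_mono) auto
    then show ?thesis by simp
  qed
  define Sb where "Sb \<sigma> k = (\<Sum>i\<in>{k*n..<Suc k*n}. \<sigma> i)" for \<sigma> :: "nat \<Rightarrow> real" and k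
  define Ej where "Ej j = exp (c*(of_int j)^2/(2*n) - lam j * of_int j)" for j :: int
  define F where "F \<sigma> k j = Ej j * exp (lam j * Sb \<sigma> k)" for \<sigma> k j
  define B where "B = exp (-(n*((1-c)*\<delta>^2/2 + \<delta>^4/12)))"
  have Ndiv: "N div s = n" using N s by simp
  have blk: "block N s k = {k*n..<Suc k*n}" for k unfolding block_def Ndiv ..
  have bm: "blockmag N s \<sigma> k = Sb \<sigma> k / n" for \<sigma> k
    unfolding blockmag_def blk Sb_def using N s by (simp add: field_simps)
  have en: "energy N s \<beta> \<alpha> \<sigma> = n/2 * (\<Sum>i<s. \<Sum>j<s. blockmag N s \<sigma> i * interA \<beta> \<alpha> s i j * blockmag N s \<sigma> j)" for \<sigma>
    unfolding energy_def using N s by simp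
  have Z: "1 \<le> partition_fn N s \<beta> \<alpha>"
  proof -
    have "(\<Sum>\<sigma>\<in>configs N. (1/2::real)^N) \<le> partition_fn N s \<beta> \<alpha>"
      unfolding partition_fn_def
    proof (rule sum_mono)
      fix \<sigma> assume "\<sigma> \<in> configs N"
      have "0 \<le> energy N s \<beta> \<alpha> \<sigma>" unfolding en using quad_bounds(1)[OF s a(1,2)] by simp
      then show "(1/2::real)^N \<le> gibbs_weight N s \<beta> \<alpha> \<sigma>" unfolding gibbs_weight_def by simp
    qed
    moreover have "(\<Sum>\<sigma>\<in>configs N. (1/2::real)^N) = 1"
      by (simp add: card_configs power_one_over)
    ultimately show ?thesis by simp
  qed
  define G where "G \<sigma> = (1/2::real)^N * (\<Prod>k<s. \<Sum>j\<in>J. F \<sigma> k j)" for \<sigma>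
  have Fnn: "0 \<le> F \<sigma> k j" for \<sigma> k j unfolding F_def Ej_def by simp
  have Gnn: "0 \<le> G \<sigma>" for \<sigma> unfolding G_def by (intro mult_nonneg_nonneg prod_nonneg sum_nonneg) (auto simp: Fnn)
  have pw: "gibbs_weight N s \<beta> \<alpha> \<sigma> \<le> G \<sigma>" if \<sigma>: "\<sigma> \<in> all_large N s \<delta>" for \<sigma>
  proof -
    have conf: "\<sigma> \<in> configs N" and lg: "\<forall>k<s. \<delta> < \<bar>blockmag N s \<sigma> k\<bar>"
      using \<sigma> unfolding all_large_def by auto
    let ?m = "blockmag N s \<sigma>"
    have "energy N s \<beta> \<alpha> \<sigma> \<le> n/2 * (c * (\<Sum>k<s. ?m k ^ 2))"
      unfolding en c_def by (rule mult_left_mono[OF quad_bounds(2)[OF s a(1,2)]]) simp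
    also have "\<dots> = (\<Sum>k<s. c * n * ?m k ^ 2 / 2)"
      by (simp add: sum_distrib_left sum_divide_distrib algebra_simps)
    finally have "exp (energy N s \<beta> \<alpha> \<sigma>) \<le> exp (\<Sum>k<s. c * n * ?m k ^ 2 / 2)" by simp
    also have "\<dots> = (\<Prod>k<s. exp (c * n * ?m k ^ 2 / 2))" by (simp add: exp_sum)
    also have "\<dots> \<le> (\<Prod>k<s. \<Sum>j\<in>J. F \<sigma> k j)"
    proof (rule prod_mono, rule conjI)
      fix k assume "k \<in> {..<s}"
      then have k: "k < s" by simp
      have "\<forall>i\<in>{k*n..<Suc k*n}. \<sigma> i \<in> {-1,1}"
      proof
        fix i assume "i \<in> {k*n..<Suc k*n}"
        then have "i < N" using k N
          by (metis atLeastLessThan_iff dual_order.strict_trans1 mult.commute mult_le_mono2 Suc_leI)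
        then show "\<sigma> i \<in> {-1,1}" using conf unfolding configs_def by auto
      qed
      from int_sum[OF _ this] obtain j0 where j0: "Sb \<sigma> k = of_int j0" "\<bar>j0\<bar> \<le> int n"
        unfolding Sb_def by auto
      have "\<delta> < \<bar>of_int j0 / real n\<bar>" using lg k bm j0 by metis
      then have "\<delta> * n < \<bar>of_int j0\<bar>" using n by (simp add: abs_divide field_simps)
      then have j0J: "j0 \<in> J" unfolding J_def using j0 by auto
      have "exp (c * n * ?m k ^ 2 / 2) = F \<sigma> k j0"
        unfolding F_def Ej_def bm j0 using n
        by (simp add: exp_add[symmetric] power_divide field_simps power2_eq_square)
      also have "\<dots> \<le> (\<Sum>j\<in>J. F \<sigma> k j)"
        by (rule member_le_sum[OF j0J _ finJ]) (simp add: Fnn)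
      finally show "exp (c * n * ?m k ^ 2 / 2) \<le> (\<Sum>j\<in>J. F \<sigma> k j)" .
    qed simp
    finally show ?thesis unfolding gibbs_weight_def G_def by (simp add: mult.commute)
  qed
  have num: "(\<Sum>\<sigma>\<in>all_large N s \<delta> \<inter> configs N. gibbs_weight N s \<beta> \<alpha> \<sigma>) \<le> (\<Sum>\<sigma>\<in>configs N. G \<sigma>)"
  proof -
    have "(\<Sum>\<sigma>\<in>all_large N s \<delta> \<inter> configs N. gibbs_weight N s \<beta> \<alpha> \<sigma>)
        \<le> (\<Sum>\<sigma>\<in>all_large N s \<delta> \<inter> configs N. G \<sigma>)"
      by (rule sum_mono) (use pw in auto)
    also have "\<dots> \<le> (\<Sum>\<sigma>\<in>configs N. G \<sigma>)"
      by (rule sum_mono2[OF finite_configs]) (auto simp: Gnn)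
    finally show ?thesis .
  qed
  define R where "R = PiE {..<s} (\<lambda>_. J)"
  have finR: "finite R" unfolding R_def using finJ by (auto intro: finite_PiE)
  have "(\<Sum>\<sigma>\<in>configs N. G \<sigma>) = (\<Sum>\<sigma>\<in>configs N. \<Sum>\<rho>\<in>R. (1/2::real)^N * (\<Prod>k<s. F \<sigma> k (\<rho> k)))"
    unfolding G_def R_def by (simp add: prod_sum_PiE[OF _ finJ] sum_distrib_left)
  also have "\<dots> = (\<Sum>\<rho>\<in>R. \<Sum>\<sigma>\<in>configs N. (1/2::real)^N * (\<Prod>k<s. F \<sigma> k (\<rho> k)))"
    by (rule sum.swap)
  also have "\<dots> \<le> (\<Sum>\<rho>\<in>R. B ^ s)"
  proof (rule sum_mono)
    fix \<rho> assume \<rho>: "\<rho> \<in> R"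
    define \<nu> where "\<nu> i = lam (\<rho> (i div n))" for i
    have eq1: "(1/2::real)^N * (\<Prod>k<s. F \<sigma> k (\<rho> k)) =
        (\<Prod>k<s. Ej (\<rho> k)) * (\<Prod>i<N. exp (\<nu> i * \<sigma> i) / 2)" for \<sigma>
    proof -
      have "(\<Prod>k<s. F \<sigma> k (\<rho> k)) = (\<Prod>k<s. Ej (\<rho> k)) * (\<Prod>k<s. exp (lam (\<rho> k) * Sb \<sigma> k))"
        unfolding F_def by (rule prod.distrib)
      also have "(\<Prod>k<s. exp (lam (\<rho> k) * Sb \<sigma> k)) = exp (\<Sum>k<s. lam (\<rho> k) * Sb \<sigma> k)"
        by (simp add: exp_sum)
      also have "(\<Sum>k<s. lam (\<rho> k) * Sb \<sigma> k) = (\<Sum>k<s. \<Sum>i\<in>{k*n..<Suc k*n}. \<nu> i * \<sigma> i)"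
        unfolding Sb_def \<nu>_def sum_distrib_left
        by (rule sum.cong[OF refl], rule sum.cong[OF refl]) (simp add: div_in_block)
      also have "\<dots> = (\<Sum>i<N. \<nu> i * \<sigma> i)" unfolding N by (rule group_sum)
      also have "exp \<dots> = (\<Prod>i<N. exp (\<nu> i * \<sigma> i))" by (simp add: exp_sum)
      finally show ?thesis
        by (simp add: prod_dividef power_one_over mult.commute mult.left_commute)
    qed
    have "(\<Sum>\<sigma>\<in>configs N. (1/2::real)^N * (\<Prod>k<s. F \<sigma> k (\<rho> k)))
        = (\<Prod>k<s. Ej (\<rho> k)) * (\<Sum>\<sigma>\<in>configs N. \<Prod>i<N. exp (\<nu> i * \<sigma> i) / 2)"
      by (simp add: eq1 sum_distrib_left)
    also have "(\<Sum>\<sigma>\<in>configs N. \<Prod>i<N. exp (\<nu> i * \<sigma> i) / 2) = (\<Prod>i<N. ch (\<nu> i))"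
      using config_sum[of "\<lambda>i y. exp (\<nu> i * y) / 2" N] unfolding ch_def by (simp add: add_divide_distrib)
    also have "\<dots> = (\<Prod>k<s. \<Prod>i\<in>{k*n..<Suc k*n}. ch (\<nu> i))" unfolding N by (rule group_prod[symmetric])
    also have "\<dots> = (\<Prod>k<s. ch (lam (\<rho> k)) ^ n)"
      by (rule prod.cong[OF refl]) (simp add: \<nu>_def div_in_block)
    also have "(\<Prod>k<s. Ej (\<rho> k)) * \<dots> = (\<Prod>k<s. Ej (\<rho> k) * ch (lam (\<rho> k)) ^ n)"
      by (simp add: prod.distrib)
    also have "\<dots> \<le> (\<Prod>k<s. B)"
    proof (rule prod_mono, rule conjI)
      fix k assume "k \<in> {..<s}"
      then have jJ: "\<rho> k \<in> J" using \<rho> unfolding R_def by auto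
      define j where "j = \<rho> k"
      define x where "x = real_of_int j / n"
      have jn: "\<bar>j\<bar> \<le> int n" and jd: "\<delta> * n < \<bar>of_int j\<bar>" using jJ unfolding J_def j_def by auto
      have xd: "\<delta> < \<bar>x\<bar>" using jd n unfolding x_def by (simp add: abs_divide field_simps)
      have jx: "real_of_int j = n * x" unfolding x_def using n by simp
      show "0 \<le> Ej (\<rho> k) * ch (lam (\<rho> k)) ^ n" unfolding Ej_def ch_def by simp
      have "ch (lam j) ^ n \<le> exp (lam j * x - x^2/2 - x^4/12) ^ n"
        by (rule power_mono) (use lam[OF jn] in \<open>auto simp: x_def ch_def\<close>)
      also have "\<dots> = exp (n * (lam j * x - x^2/2 - x^4/12))"
        by (simp add: exp_of_nat_mult[symmetric])
      finally have "Ej j * ch (lam j) ^ n \<le> Ej j * exp (n * (lam j * x - x^2/2 - x^4/12))"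
        by (rule mult_left_mono) (simp add: Ej_def)
      also have "\<dots> = exp (-(n * ((1-c)*x^2/2 + x^4/12)))"
        unfolding Ej_def jx using n by (simp add: exp_add[symmetric] power2_eq_square field_simps)
      also have "\<dots> \<le> B"
      proof -
        have d2: "\<delta>^2 \<le> x^2" using xd d by (simp add: abs_le_square_iff[symmetric] less_imp_le)
        moreover have "\<delta>^4 \<le> x^4"
          using d2 power_mono[of "\<delta>^2" "x^2" 2] by (simp add: power_mult[symmetric])
        moreover have "0 \<le> 1 - c" using a unfolding c_def by simp
        ultimately have "(1-c)*\<delta>^2/2 + \<delta>^4/12 \<le> (1-c)*x^2/2 + x^4/12"
          by (smt (verit) mult_left_mono divide_right_mono)
        then show ?thesis unfolding B_def using n by (simp add: mult_left_mono)
      qed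
      finally show "Ej (\<rho> k) * ch (lam (\<rho> k)) ^ n \<le> B" unfolding j_def .
    qed
    also have "\<dots> = B ^ s" by simp
    finally show "(\<Sum>\<sigma>\<in>configs N. (1/2::real)^N * (\<Prod>k<s. F \<sigma> k (\<rho> k))) \<le> B ^ s" .
  qed
  also have "\<dots> = card J ^ s * B ^ s" unfolding R_def by (simp add: card_PiE)
  also have "\<dots> \<le> (2*n+1) ^ s * B ^ s"
    by (intro mult_right_mono) (use cardJ in \<open>simp_all add: B_def power_mono\<close>)
  also have "\<dots> = ((2*n+1) * B) ^ s" by (simp add: power_mult_distrib)
  finally have numb: "(\<Sum>\<sigma>\<in>all_large N s \<delta> \<inter> configs N. gibbs_weight N s \<beta> \<alpha> \<sigma>) \<le> ((2*n+1) * B) ^ s"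
    using num by linarith
  have nn: "0 \<le> (\<Sum>\<sigma>\<in>all_large N s \<delta> \<inter> configs N. gibbs_weight N s \<beta> \<alpha> \<sigma>)"
    by (rule sum_nonneg) (simp add: gibbs_weight_def)
  have "gibbs N s \<beta> \<alpha> (all_large N s \<delta>) \<le> (\<Sum>\<sigma>\<in>all_large N s \<delta> \<inter> configs N. gibbs_weight N s \<beta> \<alpha> \<sigma>)"
    unfolding gibbs_def using Z nn by (simp add: divide_le_eq mult_le_cancel_left1 order.trans[OF _ mult_right_mono[OF Z nn]])
  also note numb
  finally show ?thesis unfolding B_def c_def by simp
qed






lemma gibbs_nonneg: "0 \<le> gibbs N s \<beta> \<alpha> E"
  unfolding gibbs_def partition_fn_def gibbs_weight_def
  by (intro divide_nonneg_nonneg sum_nonneg) auto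

lemma bound_exp:
  fixes n s :: nat and X :: real assumes "0 < n"
  shows "((2*n+1) * exp X)^s = exp (s * (ln (2*n+1) + X))"
proof -
  have "(2*n+1::real) * exp X = exp (ln (2*n+1) + X)" by (simp add: exp_add)
  then show ?thesis by (simp add: exp_of_nat_mult)
qed

theorem lemma3p2:
  fixes s :: "nat \<Rightarrow> nat" and \<beta> \<alpha> \<delta> :: real
  assumes "0 < \<alpha>" and "2 * \<alpha> < \<beta>"
    and "\<forall>N. 0 < s N" and "\<forall>N. s N dvd N" and "mono s"
    and "0 < \<delta>" and "\<delta> < 1"
    and "(\<lambda>N. real (s N) / real N) \<longlonglongrightarrow> 0"
  shows "(\<beta> + 2 * \<alpha> < 1 \<longrightarrow>
            (\<exists>g :: nat \<Rightarrow> real. g \<longlonglongrightarrow> 0 \<and>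
               (\<forall>\<^sub>F N in sequentially. gibbs N (s N) \<beta> \<alpha> (all_large N (s N) \<delta>)
                  \<le> exp (- (((1 - (\<beta> + 2 * \<alpha>)) / 2 - g N) * real N * \<delta>^2))))
            \<and> (\<lambda>N. gibbs N (s N) \<beta> \<alpha> (all_large N (s N) \<delta>)) \<longlonglongrightarrow> 0)
       \<and> (\<beta> + 2 * \<alpha> = 1 \<longrightarrow>
            (\<exists>g :: nat \<Rightarrow> real. g \<longlonglongrightarrow> 0 \<and>
               (\<forall>\<^sub>F N in sequentially. gibbs N (s N) \<beta> \<alpha> (all_large N (s N) \<delta>)
                  \<le> exp (- ((1 / 12 - g N) * real N * \<delta>^4)))))"
proof -
  note a = assms
  define c where "c = \<beta> + 2*\<alpha>"
  define n where "n N = N div s N" for N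
  have Nn: "N = s N * n N" for N using a(4) unfolding n_def by simp
  have npos: "0 < n N" if "0 < N" for N
    using Nn[of N] that by (metis gr0I mult_0_right)
  have rn: "real (n N) = real N / real (s N)" for N
    using Nn[of N] a(3) by (simp add: field_simps) (metis of_nat_mult)
  have evpos: "\<forall>\<^sub>F N in sequentially. 0 < N" by (simp add: eventually_gt_at_top)
  have nlim: "filterlim (\<lambda>N. real (n N)) at_top sequentially"
  proof -
    have "filterlim (\<lambda>N. real (s N) / real N) (at_right 0) sequentially"
    proof (rule tendsto_imp_filterlim_at_right[OF a(8)])
      show "\<forall>\<^sub>F N in sequentially. 0 < real (s N) / real N"
        using evpos by eventually_elim (use a(3) in simp)
    qed
    from filterlim_compose[OF filterlim_inverse_at_top_right this]
    have "filterlim (\<lambda>N. inverse (real (s N) / real N)) at_top sequentially" .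
    then show ?thesis by (simp add: rn)
  qed
  have hlim: "((\<lambda>y::real. ln (2*y+1) / y) \<longlongrightarrow> 0) at_top" by real_asymp
  have glim: "(\<lambda>N. ln (2 * real (n N) + 1) / real (n N)) \<longlonglongrightarrow> 0"
    by (rule filterlim_compose[OF hlim nlim])
  define h where "h N = ln (2 * real (n N) + 1) / real (n N)" for N
  have hl: "h \<longlonglongrightarrow> 0" using glim unfolding h_def .
  have mb: "gibbs N (s N) \<beta> \<alpha> (all_large N (s N) \<delta>) \<le>
      exp (real (s N) * (ln (2 * real (n N) + 1) - n N * ((1-c)*\<delta>^2/2 + \<delta>^4/12)))"
    if "0 < N" "c \<le> 1" for N
  proof -
    have "gibbs N (s N) \<beta> \<alpha> (all_large N (s N) \<delta>) \<le>
      ((2*n N+1) * exp (-(n N*((1-c)*\<delta>^2/2 + \<delta>^4/12))))^s N"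
      unfolding c_def by (rule main_bound) (use a that npos Nn c_def in auto)
    also have "\<dots> = exp (real (s N) * (ln (2 * real (n N) + 1) - n N * ((1-c)*\<delta>^2/2 + \<delta>^4/12)))"
      using bound_exp[OF npos[OF that(1)]] by simp
    finally show ?thesis .
  qed
  have sub: "\<beta> + 2 * \<alpha> < 1 \<longrightarrow>
            (\<exists>g :: nat \<Rightarrow> real. g \<longlonglongrightarrow> 0 \<and>
               (\<forall>\<^sub>F N in sequentially. gibbs N (s N) \<beta> \<alpha> (all_large N (s N) \<delta>)
                  \<le> exp (- (((1 - (\<beta> + 2 * \<alpha>)) / 2 - g N) * real N * \<delta>^2))))
            \<and> (\<lambda>N. gibbs N (s N) \<beta> \<alpha> (all_large N (s N) \<delta>)) \<longlonglongrightarrow> 0"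
  proof
    assume c1: "\<beta> + 2 * \<alpha> < 1"
    define g where "g N = h N / \<delta>^2" for N
    have gl: "g \<longlonglongrightarrow> 0" unfolding g_def using tendsto_divide_zero[OF hl] by simp
    have ev: "\<forall>\<^sub>F N in sequentially. gibbs N (s N) \<beta> \<alpha> (all_large N (s N) \<delta>)
                  \<le> exp (- (((1 - (\<beta> + 2 * \<alpha>)) / 2 - g N) * real N * \<delta>^2))"
      using evpos
    proof eventually_elim
      case (elim N)
      have np: "0 < real (n N)" using npos[OF elim] by simp
      have RN: "real N = real (s N) * real (n N)" using Nn[of N] by (metis of_nat_mult)
      have "real (s N) * (ln (2 * real (n N) + 1) - n N * ((1-c)*\<delta>^2/2 + \<delta>^4/12))
          \<le> - (((1 - (\<beta> + 2 * \<alpha>)) / 2 - g N) * real N * \<delta>^2)"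
      proof -
        have e: "g N * real N * \<delta>^2 = real (s N) * ln (2 * real (n N) + 1)"
          unfolding g_def h_def RN using np a(6) by (simp add: field_simps)
        have nn: "0 \<le> real (s N) * n N * (\<delta>^4/12)" by simp
        have f: "real (s N) * n N * ((1-c)*\<delta>^2/2) = (1-c)/2 * real N * \<delta>^2"
          unfolding RN by (simp add: algebra_simps)
        have l: "real (s N) * (ln (2 * real (n N) + 1) - n N * ((1-c)*\<delta>^2/2 + \<delta>^4/12))
           = real (s N) * ln (2 * real (n N) + 1) - real (s N) * n N * ((1-c)*\<delta>^2/2) - real (s N) * n N * (\<delta>^4/12)"
          by (simp add: algebra_simps)
        have r: "- (((1 - (\<beta> + 2 * \<alpha>)) / 2 - g N) * real N * \<delta>^2) = - ((1-c)/2 * real N * \<delta>^2) + g N * real N * \<delta>^2"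
          unfolding c_def by (simp add: algebra_simps)
        show ?thesis unfolding l r using e f nn by linarith
      qed
      then have ee: "exp (real (s N) * (ln (2 * real (n N) + 1) - n N * ((1-c)*\<delta>^2/2 + \<delta>^4/12)))
          \<le> exp (- (((1 - (\<beta> + 2 * \<alpha>)) / 2 - g N) * real N * \<delta>^2))" by simp
      have cle: "c \<le> 1" using c1 unfolding c_def by simp
      show ?case by (rule order.trans[OF mb[OF elim cle] ee])
    qed
    have lim0: "(\<lambda>N. gibbs N (s N) \<beta> \<alpha> (all_large N (s N) \<delta>)) \<longlonglongrightarrow> 0"
    proof (rule tendsto_sandwich[OF _ ev])
      show "\<forall>\<^sub>F N in sequentially. 0 \<le> gibbs N (s N) \<beta> \<alpha> (all_large N (s N) \<delta>)"
        by (simp add: gibbs_nonneg)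
      show "(\<lambda>N. 0::real) \<longlonglongrightarrow> 0" by simp
      have k: "(\<lambda>N. (1 - (\<beta> + 2 * \<alpha>)) / 2 - g N) \<longlonglongrightarrow> (1 - (\<beta> + 2 * \<alpha>)) / 2"
        using tendsto_diff[OF tendsto_const gl] by simp
      have r: "filterlim (\<lambda>N. real N * \<delta>^2) at_top sequentially"
        using filterlim_tendsto_pos_mult_at_top[OF tendsto_const _ filterlim_real_sequentially, of "\<delta>^2"] a(6)
        by (simp add: mult.commute)
      have "filterlim (\<lambda>N. ((1 - (\<beta> + 2 * \<alpha>)) / 2 - g N) * (real N * \<delta>^2)) at_top sequentially"
        by (rule filterlim_tendsto_pos_mult_at_top[OF k _ r]) (use c1 in simp)
      then have "filterlim (\<lambda>N. - (((1 - (\<beta> + 2 * \<alpha>)) / 2 - g N) * real N * \<delta>^2)) at_bot sequentially"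
        by (simp add: filterlim_uminus_at_top[symmetric] mult.assoc)
      from filterlim_compose[OF exp_at_bot this]
      show "(\<lambda>N. exp (- (((1 - (\<beta> + 2 * \<alpha>)) / 2 - g N) * real N * \<delta>^2))) \<longlonglongrightarrow> 0" .
    qed
    show "(\<exists>g :: nat \<Rightarrow> real. g \<longlonglongrightarrow> 0 \<and>
               (\<forall>\<^sub>F N in sequentially. gibbs N (s N) \<beta> \<alpha> (all_large N (s N) \<delta>)
                  \<le> exp (- (((1 - (\<beta> + 2 * \<alpha>)) / 2 - g N) * real N * \<delta>^2))))
            \<and> (\<lambda>N. gibbs N (s N) \<beta> \<alpha> (all_large N (s N) \<delta>)) \<longlonglongrightarrow> 0"
      using gl ev lim0 by blast
  qed
  have crit: "\<beta> + 2 * \<alpha> = 1 \<longrightarrow>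
            (\<exists>g :: nat \<Rightarrow> real. g \<longlonglongrightarrow> 0 \<and>
               (\<forall>\<^sub>F N in sequentially. gibbs N (s N) \<beta> \<alpha> (all_large N (s N) \<delta>)
                  \<le> exp (- ((1 / 12 - g N) * real N * \<delta>^4))))"
  proof
    assume c1: "\<beta> + 2 * \<alpha> = 1"
    define g where "g N = h N / \<delta>^4" for N
    have gl: "g \<longlonglongrightarrow> 0" unfolding g_def using tendsto_divide_zero[OF hl] by simp
    have ev: "\<forall>\<^sub>F N in sequentially. gibbs N (s N) \<beta> \<alpha> (all_large N (s N) \<delta>)
                  \<le> exp (- ((1 / 12 - g N) * real N * \<delta>^4))"
      using evpos
    proof eventually_elim
      case (elim N)
      have np: "0 < real (n N)" using npos[OF elim] by simp
      have RN: "real N = real (s N) * real (n N)" using Nn[of N] by (metis of_nat_mult)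
      have "real (s N) * (ln (2 * real (n N) + 1) - n N * ((1-c)*\<delta>^2/2 + \<delta>^4/12))
          = - ((1 / 12 - g N) * real N * \<delta>^4)"
      proof -
        have e: "g N * real N * \<delta>^4 = real (s N) * ln (2 * real (n N) + 1)"
          unfolding g_def h_def RN using np a(6) by (simp add: field_simps)
        have z: "real (s N) * n N * ((1-c)*\<delta>^2/2) = 0" using c1 unfolding c_def by simp
        have f: "real (s N) * n N * (\<delta>^4/12) = 1/12 * real N * \<delta>^4"
          unfolding RN by (simp add: algebra_simps)
        have l: "real (s N) * (ln (2 * real (n N) + 1) - n N * ((1-c)*\<delta>^2/2 + \<delta>^4/12))
           = real (s N) * ln (2 * real (n N) + 1) - real (s N) * n N * ((1-c)*\<delta>^2/2) - real (s N) * n N * (\<delta>^4/12)"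
          by (simp add: algebra_simps)
        have r: "- ((1 / 12 - g N) * real N * \<delta>^4) = - (1/12 * real N * \<delta>^4) + g N * real N * \<delta>^4"
          by (simp add: algebra_simps)
        show ?thesis unfolding l r using e f z by linarith
      qed
      then show ?case using mb[OF elim] c1 unfolding c_def by simp
    qed
    show "\<exists>g :: nat \<Rightarrow> real. g \<longlonglongrightarrow> 0 \<and>
               (\<forall>\<^sub>F N in sequentially. gibbs N (s N) \<beta> \<alpha> (all_large N (s N) \<delta>)
                  \<le> exp (- ((1 / 12 - g N) * real N * \<delta>^4)))"
      using gl ev by blast
  qed
  show ?thesis using sub crit by blast
qed

end
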